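(* There exists a one-sided non-adaptive tester for $k$-monotonicity of functions $f\colon\{0,1\}^d\to\{0,1\}$ with query complexity $q(d,\varepsilon,k)=2^{O(\sqrt{d}\cdot\log d\cdot\log(1/\varepsilon))}$ (in particular, independent of $k$).
   Context: The hypercube $\{0,1\}^d$ is ordered coordinatewise. A function $f\colon\{0,1\}^d\to\{0,1\}$ is $k$-monotone if there is no chain $x_1\preceq\cdots\preceq x_{k+1}$ with $f(x_1)=1$ and $f(x_i)\neq f(x_{i+1})$ for all $i\in[k]$. Distance is the normalized Hamming distance $\Pr_x[f(x)\neq g(x)]$ over uniform $x$; $f$ is $\varepsilon$-far from $k$-monotone if its distance to every $k$-monotone function is at least $\varepsilon$. A tester, given $\varepsilon$ and query access to $f$, accepts $k$-monotone $f$ with probability at least $2/3$ and rejects $\varepsilon$-far $f$ with probability at least $2/3$; it is one-sided if it accepts $k$-monotone functions with probability $1$, and non-adaptive if its queries do not depend on previous answers. *)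

theory Defs
  imports "HOL-Probability.Probability_Mass_Function"
begin

text \<open>Points of the hypercube {0,1}^d are encoded as subsets of {0..<d};
  the coordinatewise order is set inclusion.\<close>

definition cube :: "nat \<Rightarrow> nat set set" where
  "cube d = Pow {..<d}"

definition k_monotone :: "nat \<Rightarrow> nat \<Rightarrow> (nat set \<Rightarrow> bool) \<Rightarrow> bool" where
  "k_monotone d k f \<longleftrightarrow>
     \<not> (\<exists>xs. length xs = Suc k \<and> (\<forall>i<Suc k. xs ! i \<in> cube d)
            \<and> (\<forall>i<k. xs ! i \<subseteq> xs ! Suc i)
            \<and> f (xs ! 0) \<and> (\<forall>i<k. f (xs ! i) \<noteq> f (xs ! Suc i)))"

definition cube_dist :: "nat \<Rightarrow> (nat set \<Rightarrow> bool) \<Rightarrow> (nat set \<Rightarrow> bool) \<Rightarrow> real" where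
  "cube_dist d f g = real (card {x \<in> cube d. f x \<noteq> g x}) / 2 ^ d"

definition eps_far :: "nat \<Rightarrow> nat \<Rightarrow> real \<Rightarrow> (nat set \<Rightarrow> bool) \<Rightarrow> bool" where
  "eps_far d k \<epsilon> f \<longleftrightarrow> (\<forall>g. k_monotone d k g \<longrightarrow> cube_dist d f g \<ge> \<epsilon>)"

text \<open>A non-adaptive randomized tester: a distribution over pairs (Q, D) of a query
  set Q (chosen before any answers) and a decision rule D which only sees the
  answers of f on Q.\<close>

type_synonym na_tester = "(nat set set \<times> ((nat set \<Rightarrow> bool) \<Rightarrow> bool)) pmf"

definition restrict_to :: "nat set set \<Rightarrow> (nat set \<Rightarrow> bool) \<Rightarrow> (nat set \<Rightarrow> bool)" where
  "restrict_to Q f = (\<lambda>x. if x \<in> Q then f x else False)"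

definition accept_prob :: "na_tester \<Rightarrow> (nat set \<Rightarrow> bool) \<Rightarrow> real" where
  "accept_prob T f = measure_pmf.prob T {(Q, D). D (restrict_to Q f)}"

end

theory Submission
  imports Defs "HOL-Probability.Probability"
begin


definition viol_in :: "nat \<Rightarrow> nat set set \<Rightarrow> (nat set \<Rightarrow> bool) \<Rightarrow> bool" where
 "viol_in k Q h \<longleftrightarrow> (\<exists>xs. length xs = Suc k \<and> (\<forall>i<Suc k. xs!i \<in> Q) \<and> (\<forall>i<k. xs!i \<subseteq> xs!Suc i)
     \<and> h (xs!0) \<and> (\<forall>i<k. h (xs!i) \<noteq> h (xs!Suc i)))"

lemma viol_in_not_mono: "Q \<subseteq> cube d \<Longrightarrow> viol_in k Q h \<Longrightarrow> \<not> k_monotone d k h"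
  unfolding viol_in_def k_monotone_def by blast

lemma viol_in_mono: "Q \<subseteq> Q' \<Longrightarrow> viol_in k Q h \<Longrightarrow> viol_in k Q' h"
  unfolding viol_in_def by blast

lemma viol_in_restrict: "viol_in k Q (restrict_to Q f) = viol_in k Q f"
proof -
  have "\<And>xs i. (\<forall>i<Suc k. xs!i \<in> Q) \<Longrightarrow> i < Suc k \<Longrightarrow> restrict_to Q f (xs!i) = f (xs!i)"
    by (simp add: restrict_to_def)
  then show ?thesis unfolding viol_in_def
    by (smt (verit, ccfv_SIG) Suc_mono less_Suc_eq zero_less_Suc)
qed

definition alt :: "nat \<Rightarrow> nat \<Rightarrow> (nat set \<Rightarrow> bool) \<Rightarrow> nat set list \<Rightarrow> bool" where
 "alt d a f xs \<longleftrightarrow> xs \<noteq> [] \<and> (\<forall>i<length xs. xs!i \<in> cube d \<and> a \<le> card (xs!i)) \<and> f (xs!0)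
     \<and> (\<forall>i. Suc i < length xs \<longrightarrow> xs!i \<subseteq> xs!Suc i \<and> f (xs!i) \<noteq> f (xs!Suc i))"

definition P :: "nat \<Rightarrow> nat \<Rightarrow> (nat set \<Rightarrow> bool) \<Rightarrow> nat \<Rightarrow> nat set \<Rightarrow> bool" where
 "P d a f j x \<longleftrightarrow> (\<exists>xs. alt d a f xs \<and> last xs = x \<and> j \<le> length xs)"

definition Lk :: "nat \<Rightarrow> nat \<Rightarrow> (nat set \<Rightarrow> bool) \<Rightarrow> nat \<Rightarrow> nat set \<Rightarrow> nat" where
 "Lk d a f k x = Max {j. j \<le> k \<and> (j = 0 \<or> P d a f j x)}"

lemma alt_parity: "alt d a f xs \<Longrightarrow> i < length xs \<Longrightarrow> f (xs!i) = even i"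
proof (induction i)
  case 0 then show ?case by (simp add: alt_def)
next
  case (Suc i)
  then have "f (xs!i) \<noteq> f (xs!Suc i)" by (simp add: alt_def)
  with Suc show ?case by auto
qed

lemma alt_last: "alt d a f xs \<Longrightarrow> f (last xs) = odd (length xs)"
proof -
  assume h: "alt d a f xs"
  then have ne: "xs \<noteq> []" by (simp add: alt_def)
  then have "last xs = xs ! (length xs - 1)" by (simp add: last_conv_nth)
  moreover have "f (xs ! (length xs - 1)) = even (length xs - 1)"
    using alt_parity[OF h] ne by simp
  ultimately show ?thesis using ne by (cases "length xs") auto
qed

lemma alt_sub: "alt d a f xs \<Longrightarrow> j < length xs \<Longrightarrow> i \<le> j \<Longrightarrow> xs!i \<subseteq> xs!j"
proof (induction j)
  case 0 then show ?case by simp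
next
  case (Suc j)
  show ?case
  proof (cases "i = Suc j")
    case False
    then have "xs!i \<subseteq> xs!j" using Suc by auto
    moreover have "xs!j \<subseteq> xs!Suc j" using Suc.prems by (simp add: alt_def)
    ultimately show ?thesis by blast
  qed simp
qed

lemma P_mono_x:
  assumes "P d a f j x" "x \<subseteq> y" "y \<in> cube d"
  shows "P d a f j y"
proof -
  obtain xs where xs: "alt d a f xs" "last xs = x" "j \<le> length xs" using assms(1) P_def by blast
  have ne: "xs \<noteq> []" using xs by (simp add: alt_def)
  have A: "\<forall>i<length xs. xs!i \<in> cube d \<and> a \<le> card (xs!i)" using xs(1) by (simp add: alt_def)
  have B: "\<forall>i. Suc i < length xs \<longrightarrow> xs!i \<subseteq> xs!Suc i \<and> f (xs!i) \<noteq> f (xs!Suc i)"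
    using xs(1) by (simp add: alt_def)
  have F0: "f (xs!0)" using xs(1) by (simp add: alt_def)
  have fy: "finite y" using assms(3) by (simp add: cube_def finite_subset)
  have lx: "xs ! (length xs - 1) = x" using xs(2) ne by (simp add: last_conv_nth)
  have xin: "x \<in> cube d \<and> a \<le> card x"
    using A ne lx by (metis diff_less length_greater_0_conv zero_less_one)
  have cy: "a \<le> card y" using xin card_mono[OF fy assms(2)] by linarith
  show ?thesis
  proof (cases "f y = f x")
    case False
    define ys where "ys = xs @ [y]"
    have A': "\<forall>i<length ys. ys!i \<in> cube d \<and> a \<le> card (ys!i)"
    proof (intro allI impI)
      fix i assume i: "i < length ys"
      show "ys!i \<in> cube d \<and> a \<le> card (ys!i)"
      proof (cases "i < length xs")
        case True then show ?thesis using A by (simp add: nth_append ys_def)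
      next
        case False then have "i = length xs" using i by (simp add: ys_def)
        then show ?thesis using assms(3) cy by (simp add: ys_def)
      qed
    qed
    have B': "\<forall>i. Suc i < length ys \<longrightarrow> ys!i \<subseteq> ys!Suc i \<and> f (ys!i) \<noteq> f (ys!Suc i)"
    proof (intro allI impI)
      fix i assume i: "Suc i < length ys"
      show "ys!i \<subseteq> ys!Suc i \<and> f (ys!i) \<noteq> f (ys!Suc i)"
      proof (cases "Suc i < length xs")
        case True then show ?thesis using B by (simp add: nth_append ys_def)
      next
        case c: False
        then have "i = length xs - 1" "Suc i = length xs" using i by (auto simp: ys_def)
        then show ?thesis using lx assms(2) False c by (simp add: nth_append ys_def)
      qed
    qed
    have F0': "f (ys!0)" using F0 ne by (simp add: nth_append ys_def)
    have "alt d a f ys" unfolding alt_def using A' B' F0' by (simp add: ys_def)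
    then show ?thesis unfolding P_def using xs(3) by (intro exI[of _ ys]) (auto simp: ys_def)
  next
    case True
    define ys where "ys = xs[length xs - 1 := y]"
    have len: "length ys = length xs" by (simp add: ys_def)
    have A': "\<forall>i<length ys. ys!i \<in> cube d \<and> a \<le> card (ys!i)"
      using A assms(3) cy by (auto simp: ys_def nth_list_update)
    have B': "\<forall>i. Suc i < length ys \<longrightarrow> ys!i \<subseteq> ys!Suc i \<and> f (ys!i) \<noteq> f (ys!Suc i)"
    proof (intro allI impI)
      fix i assume i: "Suc i < length ys"
      show "ys!i \<subseteq> ys!Suc i \<and> f (ys!i) \<noteq> f (ys!Suc i)"
      proof (cases "Suc i = length xs - 1")
        case False then show ?thesis using B i len by (simp add: nth_list_update ys_def)
      next
        case c: True
        have "xs!i \<subseteq> xs!Suc i \<and> f (xs!i) \<noteq> f (xs!Suc i)" using B i len by simp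
        moreover have "xs!Suc i = x" using c lx by simp
        ultimately show ?thesis using c True assms(2) i len by (auto simp: nth_list_update ys_def)
      qed
    qed
    have F0': "f (ys!0)"
    proof (cases "length xs - 1 = 0")
      case True
      then have "xs!0 = x" using lx by simp
      then show ?thesis using F0 \<open>f y = f x\<close> ne by (simp add: ys_def nth_list_update)
    next
      case False then show ?thesis using F0 ne by (simp add: ys_def nth_list_update)
    qed
    have "alt d a f ys" unfolding alt_def using A' B' F0' ne by (simp add: ys_def)
    moreover have "last ys = y" using ne by (simp add: ys_def last_conv_nth)
    ultimately show ?thesis unfolding P_def using xs(3) len by auto
  qed
qed

lemma Lk_props:
  shows "Lk d a f k x \<le> k" "Lk d a f k x = 0 \<or> P d a f (Lk d a f k x) x"
    "\<And>j. j \<le> k \<Longrightarrow> P d a f j x \<Longrightarrow> j \<le> Lk d a f k x"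
proof -
  let ?S = "{j. j \<le> k \<and> (j = 0 \<or> P d a f j x)}"
  have fin: "finite ?S" by (rule finite_subset[of _ "{..k}"]) auto
  have ne: "0 \<in> ?S" by simp
  have "Lk d a f k x \<in> ?S" unfolding Lk_def using Max_in[OF fin] ne by blast
  then show "Lk d a f k x \<le> k" "Lk d a f k x = 0 \<or> P d a f (Lk d a f k x) x" by auto
  fix j assume "j \<le> k" "P d a f j x"
  then have "j \<in> ?S" by simp
  then show "j \<le> Lk d a f k x" unfolding Lk_def using Max_ge[OF fin] by blast
qed

lemma Lk_mono: "x \<subseteq> y \<Longrightarrow> y \<in> cube d \<Longrightarrow> Lk d a f k x \<le> Lk d a f k y"
proof -
  assume h: "x \<subseteq> y" "y \<in> cube d"
  show ?thesis
  proof (cases "Lk d a f k x = 0")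
    case False
    then have "P d a f (Lk d a f k x) x" using Lk_props(2)[of d a f k x] by (metis (full_types))
    then have "P d a f (Lk d a f k x) y" using P_mono_x h by blast
    then show ?thesis using Lk_props(1)[of d a f k x] Lk_props(3)[where x=y] by blast
  qed simp
qed

lemma g_kmono: "k_monotone d k (\<lambda>x. odd (Lk d a f k x))"
  unfolding k_monotone_def
proof
  assume "\<exists>xs. length xs = Suc k \<and> (\<forall>i<Suc k. xs ! i \<in> cube d) \<and> (\<forall>i<k. xs ! i \<subseteq> xs ! Suc i) \<and>
        odd (Lk d a f k (xs ! 0)) \<and> (\<forall>i<k. odd (Lk d a f k (xs ! i)) \<noteq> odd (Lk d a f k (xs ! Suc i)))"
  then obtain xs where h: "length xs = Suc k" "\<forall>i<Suc k. xs ! i \<in> cube d" "\<forall>i<k. xs ! i \<subseteq> xs ! Suc i"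
    "odd (Lk d a f k (xs ! 0))" "\<forall>i<k. odd (Lk d a f k (xs ! i)) \<noteq> odd (Lk d a f k (xs ! Suc i))" by blast
  have "\<forall>i\<le>k. Suc i \<le> Lk d a f k (xs!i)"
  proof (intro allI impI)
    fix i assume "i \<le> k" then show "Suc i \<le> Lk d a f k (xs!i)"
    proof (induction i)
      case 0 then show ?case using h(4) by (cases "Lk d a f k (xs ! 0)") auto
    next
      case (Suc i)
      then have "Suc i \<le> Lk d a f k (xs!i)" by simp
      moreover have "Lk d a f k (xs!i) \<le> Lk d a f k (xs!Suc i)"
        using Suc.prems h(2,3) by (intro Lk_mono) auto
      moreover have "odd (Lk d a f k (xs!i)) \<noteq> odd (Lk d a f k (xs!Suc i))" using Suc.prems h(5) by simp
      then have "Lk d a f k (xs!i) \<noteq> Lk d a f k (xs!Suc i)" by metis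
      ultimately show ?case by linarith
    qed
  qed
  then have "Suc k \<le> Lk d a f k (xs!k)" by simp
  then show False using Lk_props(1)[of d a f k "xs!k"] by simp
qed

lemma mismatch:
  assumes "x \<in> cube d" "f x \<noteq> odd (Lk d a f k x)"
  shows "P d a f (Suc k) x \<or> (card x < a \<and> f x)"
proof (rule ccontr)
  assume na: "\<not> (P d a f (Suc k) x \<or> (card x < a \<and> f x))"
  have short: "length xs \<le> k" if "alt d a f xs" "last xs = x" for xs
    using na that unfolding P_def by (metis not_less_eq_eq)
  let ?j = "Lk d a f k x"
  show False
  proof (cases "?j = 0")
    case True
    have "\<not> f x"
    proof
      assume fx: "f x"
      then have ca: "a \<le> card x" using na by auto
      have "alt d a f [x]" using fx ca assms(1) by (simp add: alt_def)
      then have "P d a f 1 x" by (auto simp: P_def)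
      moreover have "1 \<le> k" using short[OF \<open>alt d a f [x]\<close>] by simp
      ultimately have "1 \<le> ?j" using Lk_props(3) by blast
      then show False using True by simp
    qed
    then show False using assms(2) True by simp
  next
    case False
    then have "P d a f ?j x" using Lk_props(2)[of d a f k x] by (metis (full_types))
    then obtain xs where xs: "alt d a f xs" "last xs = x" "?j \<le> length xs" by (auto simp: P_def)
    have "length xs \<le> k" using short xs by blast
    moreover have "P d a f (length xs) x" using xs by (auto simp: P_def)
    ultimately have "length xs \<le> ?j" using Lk_props(3) by blast
    then have "length xs = ?j" using xs(3) by simp
    then have "f x = odd ?j" using alt_last[OF xs(1)] xs(2) by simp
    then show False using assms(2) by simp
  qed
qed

lemma P_viol:
  assumes "P d a f (Suc k) x"
  shows "viol_in k {y \<in> cube d. y \<subseteq> x \<and> a \<le> card y} f"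
proof -
  obtain xs where xs: "alt d a f xs" "last xs = x" "Suc k \<le> length xs" using assms by (auto simp: P_def)
  have ne: "xs \<noteq> []" using xs(1) by (simp add: alt_def)
  have lx: "xs ! (length xs - 1) = x" using xs(2) ne by (simp add: last_conv_nth)
  let ?ys = "take (Suc k) xs"
  show ?thesis unfolding viol_in_def
  proof (intro exI[of _ ?ys] conjI allI impI)
    show "length ?ys = Suc k" using xs(3) by simp
    fix i assume i: "i < Suc k"
    have "xs!i \<subseteq> xs!(length xs - 1)" using alt_sub[OF xs(1)] i xs(3) by simp
    then show "?ys!i \<in> {y \<in> cube d. y \<subseteq> x \<and> a \<le> card y}"
      using xs(1) i xs(3) lx by (auto simp: alt_def)
  next
    show "f (?ys!0)" using xs(1) by (simp add: alt_def)
  next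
    fix i assume i: "i < k"
    show "?ys!i \<subseteq> ?ys!Suc i" using xs(1) i xs(3) by (simp add: alt_def)
    show "f (?ys!i) \<noteq> f (?ys!Suc i)" using xs(1) i xs(3) by (simp add: alt_def)
  qed
qed




lemma card_cube: "card (cube d) = 2 ^ d"
  by (simp add: cube_def card_Pow)

lemma finite_cube: "finite (cube d)"
  by (simp add: cube_def)

definition Qx :: "nat \<Rightarrow> nat \<Rightarrow> nat set \<Rightarrow> nat set set" where
  "Qx d a x = {y \<in> cube d. y \<subseteq> x \<and> a \<le> card y}"

lemma far_count:
  assumes "eps_far d k \<epsilon> f"
  shows "\<epsilon> * 2 ^ d \<le> real (card {x\<in>cube d. card x < a}) + real (card {x\<in>cube d. b < card x})
     + real (card {x\<in>cube d. card x \<le> b \<and> viol_in k (Qx d a x) f})"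
proof -
  let ?g = "\<lambda>x. odd (Lk d a f k x)"
  have "\<epsilon> \<le> cube_dist d f ?g" using assms g_kmono unfolding eps_far_def by blast
  then have e: "\<epsilon> * 2 ^ d \<le> real (card {x \<in> cube d. f x \<noteq> ?g x})" by (simp add: cube_dist_def field_simps)
  have sub: "{x \<in> cube d. f x \<noteq> ?g x} \<subseteq> ({x\<in>cube d. card x < a} \<union> {x\<in>cube d. b < card x})
      \<union> {x\<in>cube d. card x \<le> b \<and> viol_in k (Qx d a x) f}"
  proof
    fix x assume x: "x \<in> {x \<in> cube d. f x \<noteq> ?g x}"
    then have "P d a f (Suc k) x \<or> (card x < a \<and> f x)" using mismatch by blast
    then show "x \<in> ({x\<in>cube d. card x < a} \<union> {x\<in>cube d. b < card x})
      \<union> {x\<in>cube d. card x \<le> b \<and> viol_in k (Qx d a x) f}"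
    proof (cases "b < card x")
      case True then show ?thesis using x by blast
    next
      case False
      then show ?thesis using x P_viol[of d a f k x] \<open>P d a f (Suc k) x \<or> (card x < a \<and> f x)\<close>
        unfolding Qx_def by (simp add: not_less) blast
    qed
  qed
  have fin: "finite (cube d)" by (rule finite_cube)
  have "card {x \<in> cube d. f x \<noteq> ?g x} \<le> card (({x\<in>cube d. card x < a} \<union> {x\<in>cube d. b < card x})
      \<union> {x\<in>cube d. card x \<le> b \<and> viol_in k (Qx d a x) f})"
    by (rule card_mono[OF _ sub]) (use fin in auto)
  also have "\<dots> \<le> card ({x\<in>cube d. card x < a} \<union> {x\<in>cube d. b < card x})
      + card {x\<in>cube d. card x \<le> b \<and> viol_in k (Qx d a x) f}" by (rule card_Un_le)
  also have "\<dots> \<le> card {x\<in>cube d. card x < a} + card {x\<in>cube d. b < card x}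
      + card {x\<in>cube d. card x \<le> b \<and> viol_in k (Qx d a x) f}"
    using card_Un_le[of "{x\<in>cube d. card x < a}" "{x\<in>cube d. b < card x}"] by linarith
  finally show ?thesis using e by linarith
qed

lemma far_count0:
  assumes "eps_far d k \<epsilon> f"
  shows "\<epsilon> * 2 ^ d \<le> real (card {x\<in>cube d. f x})"
proof -
  have "k_monotone d k (\<lambda>_. False)" by (simp add: k_monotone_def)
  then have "\<epsilon> \<le> cube_dist d f (\<lambda>_. False)" using assms unfolding eps_far_def by blast
  then show ?thesis by (simp add: cube_dist_def field_simps)
qed

definition tester :: "nat \<Rightarrow> nat \<Rightarrow> (nat set \<Rightarrow> nat set set) \<Rightarrow> nat \<Rightarrow> na_tester" where
  "tester d k Qf r = map_pmf (\<lambda>v. ((\<Union>i<r. Qf (v i)), \<lambda>h. \<not> viol_in k (\<Union>i<r. Qf (v i)) h))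
      (Pi_pmf {..<r} {} (\<lambda>_. pmf_of_set (cube d)))"

lemma cube_ne: "cube d \<noteq> {}" by (auto simp: cube_def)

lemma tester_support:
  assumes "(Q, D) \<in> set_pmf (tester d k Qf r)"
  shows "\<exists>v. (\<forall>i<r. v i \<in> cube d) \<and> Q = (\<Union>i<r. Qf (v i)) \<and> D = (\<lambda>h. \<not> viol_in k Q h)"
proof -
  from assms obtain v where v: "v \<in> set_pmf (Pi_pmf {..<r} {} (\<lambda>_. pmf_of_set (cube d)))"
    "(Q, D) = ((\<Union>i<r. Qf (v i)), \<lambda>h. \<not> viol_in k (\<Union>i<r. Qf (v i)) h)"
    unfolding tester_def set_map_pmf by blast
  then have "\<forall>i<r. v i \<in> cube d" using finite_cube cube_ne
    by (auto simp: set_Pi_pmf PiE_dflt_def)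
  then show ?thesis using v by blast
qed

lemma tester_queries:
  assumes "(Q, D) \<in> set_pmf (tester d k Qf r)" "\<forall>x\<in>cube d. Qf x \<subseteq> cube d \<and> card (Qf x) \<le> M"
  shows "Q \<subseteq> cube d" "card Q \<le> r * M" "card Q \<le> 2 ^ d"
proof -
  obtain v where v: "\<forall>i<r. v i \<in> cube d" "Q = (\<Union>i<r. Qf (v i))" using tester_support[OF assms(1)] by blast
  show qs: "Q \<subseteq> cube d" using v assms(2) by auto
  have "card Q \<le> (\<Sum>i<r. card (Qf (v i)))" unfolding v(2) by (rule card_UN_le) simp
  also have "\<dots> \<le> (\<Sum>i<r. M)" by (rule sum_mono) (use v assms(2) in auto)
  finally show "card Q \<le> r * M" by simp
  show "card Q \<le> 2 ^ d" using card_mono[OF finite_cube qs] card_cube by simp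
qed

lemma tester_complete:
  assumes "k_monotone d k f" "\<forall>x\<in>cube d. Qf x \<subseteq> cube d"
  shows "accept_prob (tester d k Qf r) f = 1"
  unfolding accept_prob_def
proof (subst measure_pmf.prob_eq_1)
  show "AE x in measure_pmf (tester d k Qf r). x \<in> {(Q, D). D (restrict_to Q f)}"
  proof (rule AE_pmfI)
    fix y assume y: "y \<in> set_pmf (tester d k Qf r)"
    obtain Q D where yQ: "y = (Q, D)" by (cases y)
    have y': "(Q, D) \<in> set_pmf (tester d k Qf r)" using y yQ by simp
    obtain v where v: "\<forall>i<r. v i \<in> cube d" "Q = (\<Union>i<r. Qf (v i))"
        "D = (\<lambda>h. \<not> viol_in k Q h)"
      using tester_support[OF y'] by blast
    have "Q \<subseteq> cube d" using v assms(2) by auto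
    then have "\<not> viol_in k Q (restrict_to Q f)"
      using viol_in_restrict[of k Q f] viol_in_not_mono[of Q d k f] assms(1) by metis
    then show "y \<in> {(Q, D). D (restrict_to Q f)}"
      using yQ v(3) by simp
  qed
qed auto

lemma tester_sound:
  assumes "G \<subseteq> cube d" "\<forall>x\<in>G. viol_in k (Qf x) f"
  shows "accept_prob (tester d k Qf r) f \<le> (1 - real (card G) / 2 ^ d) ^ r"
proof -
  let ?M = "Pi_pmf {..<r} {} (\<lambda>_. pmf_of_set (cube d))"
  have "accept_prob (tester d k Qf r) f = measure_pmf.prob ?M
      {v. \<not> viol_in k (\<Union>i<r. Qf (v i)) (restrict_to (\<Union>i<r. Qf (v i)) f)}"
    unfolding accept_prob_def tester_def by (simp add: vimage_def)
  also have "\<dots> \<le> measure_pmf.prob ?M (Pi {..<r} (\<lambda>_. - G))"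
  proof (rule measure_pmf.finite_measure_mono)
    show "{v. \<not> viol_in k (\<Union>i<r. Qf (v i)) (restrict_to (\<Union>i<r. Qf (v i)) f)} \<subseteq> Pi {..<r} (\<lambda>_. - G)"
    proof
      fix v assume v: "v \<in> {v. \<not> viol_in k (\<Union>i<r. Qf (v i)) (restrict_to (\<Union>i<r. Qf (v i)) f)}"
      show "v \<in> Pi {..<r} (\<lambda>_. - G)"
      proof (rule ccontr)
        assume "v \<notin> Pi {..<r} (\<lambda>_. - G)"
        then obtain i where i: "i < r" "v i \<in> G" by auto
        then have "viol_in k (Qf (v i)) f" using assms(2) by blast
        then have "viol_in k (\<Union>i<r. Qf (v i)) f" by (rule viol_in_mono[rotated]) (use i in auto)
        then show False using v viol_in_restrict by auto
      qed
    qed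
  qed auto
  also have "\<dots> = (\<Prod>i<r. measure_pmf.prob (pmf_of_set (cube d)) (- G))"
    by (rule measure_Pi_pmf_Pi) simp
  also have "\<dots> = (1 - real (card G) / 2 ^ d) ^ r"
  proof -
    have "cube d \<inter> - G = cube d - G" by auto
    then have "measure_pmf.prob (pmf_of_set (cube d)) (- G) = real (card (cube d - G)) / 2 ^ d"
      by (simp add: measure_pmf_of_set finite_cube cube_ne card_cube)
    also have "\<dots> = 1 - real (card G) / 2 ^ d"
      using card_Diff_subset[of G "cube d"] assms(1) finite_subset[OF assms(1) finite_cube]
        card_mono[OF finite_cube assms(1)] card_cube[of d]
      by (simp add: field_simps of_nat_diff)
    finally show ?thesis by simp
  qed
  finally show ?thesis .
qed

lemma amplify:
  fixes p :: real
  assumes "0 \<le> p" "p \<le> 1" "2 \<le> p * r"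
  shows "(1 - p) ^ r \<le> 1 / 3"
proof -
  have "(1 - p) ^ r \<le> exp (- p) ^ r"
    by (rule power_mono) (use assms exp_ge_add_one_self[of "-p"] in auto)
  also have "\<dots> = exp (- (p * r))" by (simp add: exp_of_nat_mult[symmetric] mult.commute)
  also have "\<dots> \<le> exp (-2)" using assms by simp
  also have "\<dots> \<le> 1 / 3"
  proof -
    have "exp (2::real) \<ge> 3"
    proof -
      have "exp (1::real) \<ge> 2" using exp_ge_add_one_self[of 1] by simp
      then have "exp 1 * exp 1 \<ge> (2::real) * 2" by (intro mult_mono) auto
      then show ?thesis by (simp add: exp_add[symmetric])
    qed
    then show ?thesis by (simp add: exp_minus field_simps)
  qed
  finally show ?thesis .
qed




lemma cube_binom:
  "real (card {x\<in>cube d. Pr (card x)}) / 2 ^ d = measure_pmf.prob (binomial_pmf d (1/2)) {j. Pr j}"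
proof -
  have eq: "map_pmf card (pmf_of_set (cube d)) = binomial_pmf d (1/2)"
  proof (rule pmf_eqI)
    fix j
    have s: "cube d \<inter> card -` {j} = {B. B \<subseteq> {..<d} \<and> card B = j}" by (auto simp: cube_def)
    have "pmf (map_pmf card (pmf_of_set (cube d))) j = real (card (cube d \<inter> card -` {j})) / 2 ^ d"
      by (simp add: pmf_map measure_pmf_of_set finite_cube cube_ne card_cube)
    also have "\<dots> = real (d choose j) / 2 ^ d" using s n_subsets[of "{..<d}" j] by simp
    also have "\<dots> = pmf (binomial_pmf d (1/2)) j"
    proof (cases "j \<le> d")
      case True
      have "(1/2::real) ^ j * (1/2) ^ (d - j) = (1/2) ^ (j + (d - j))" by (simp add: power_add)
      also have "\<dots> = 1 / 2 ^ d" using True by (simp add: power_one_over)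
      finally have "(1/2::real) ^ j * (1/2) ^ (d - j) = 1 / 2 ^ d" .
      then show ?thesis by (simp add: mult.assoc)
    next
      case False then show ?thesis by (simp add: binomial_eq_0)
    qed
    finally show "pmf (map_pmf card (pmf_of_set (cube d))) j = pmf (binomial_pmf d (1/2)) j" .
  qed
  have "measure_pmf.prob (binomial_pmf d (1/2)) {j. Pr j} = measure_pmf.prob (pmf_of_set (cube d)) (card -` {j. Pr j})"
    by (simp add: eq[symmetric])
  also have "\<dots> = real (card (cube d \<inter> card -` {j. Pr j})) / 2 ^ d"
    by (simp add: measure_pmf_of_set finite_cube cube_ne card_cube)
  also have "cube d \<inter> card -` {j. Pr j} = {x\<in>cube d. Pr (card x)}" by auto
  finally show ?thesis by simp
qed

lemma tail_low:
  assumes "0 < d" "0 \<le> s"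
  shows "real (card {x\<in>cube d. real (card x) \<le> real d / 2 - s}) \<le> exp (-2 * s\<^sup>2 / real d) * 2 ^ d"
proof -
  have bd: "binomial_distribution (1/2)" by unfold_locales auto
  have "real (card {x\<in>cube d. real (card x) \<le> real d / 2 - s}) / 2 ^ d
      = measure_pmf.prob (binomial_pmf d (1/2)) {j. real j \<le> real d * (1/2) - s}"
    using cube_binom[of d "\<lambda>j. real j \<le> real d * (1/2) - s"] by simp
  also have "\<dots> \<le> exp (-2 * s\<^sup>2 / real d)"
    by (rule binomial_distribution.prob_le[OF bd assms])
  finally show ?thesis by (simp add: field_simps)
qed

lemma tail_high:
  assumes "0 < d" "0 \<le> s"
  shows "real (card {x\<in>cube d. real d / 2 + s \<le> real (card x)}) \<le> exp (-2 * s\<^sup>2 / real d) * 2 ^ d"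
proof -
  have bd: "binomial_distribution (1/2)" by unfold_locales auto
  have "real (card {x\<in>cube d. real d / 2 + s \<le> real (card x)}) / 2 ^ d
      = measure_pmf.prob (binomial_pmf d (1/2)) {j. real d * (1/2) + s \<le> real j}"
    using cube_binom[of d "\<lambda>j. real d * (1/2) + s \<le> real j"] by simp
  also have "\<dots> \<le> exp (-2 * s\<^sup>2 / real d)"
    by (rule binomial_distribution.prob_ge[OF bd assms])
  finally show ?thesis by (simp add: field_simps)
qed

lemma small_subsets:
  assumes "finite X"
  shows "card {z. z \<subseteq> X \<and> card z \<le> w} \<le> (card X + 1) ^ w"
proof -
  let ?n = "card X"
  have "{z. z \<subseteq> X \<and> card z \<le> w} = (\<Union>j\<in>{..w}. {z. z \<subseteq> X \<and> card z = j})" by auto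
  then have "card {z. z \<subseteq> X \<and> card z \<le> w} \<le> (\<Sum>j\<le>w. card {z. z \<subseteq> X \<and> card z = j})"
    using card_UN_le[of "{..w}" "\<lambda>j. {z. z \<subseteq> X \<and> card z = j}"] by simp
  also have "\<dots> = (\<Sum>j\<le>w. ?n choose j)" using n_subsets[OF assms] by simp
  also have "\<dots> \<le> (\<Sum>j\<le>w. ?n ^ j)"
  proof (rule sum_mono)
    fix j show "?n choose j \<le> ?n ^ j"
      by (cases "j \<le> ?n") (auto simp: binomial_le_pow binomial_eq_0)
  qed
  also have "\<dots> \<le> (\<Sum>j\<le>w. (w choose j) * ?n ^ j * 1 ^ (w - j))"
  proof (rule sum_mono)
    fix j assume "j \<in> {..w}"
    then have "1 \<le> w choose j" by (simp add: Suc_le_eq)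
    then show "?n ^ j \<le> (w choose j) * ?n ^ j * 1 ^ (w - j)" by simp
  qed
  also have "\<dots> = (?n + 1) ^ w" by (subst binomial_ring) simp
  finally show ?thesis .
qed

lemma card_Qx:
  assumes "x \<in> cube d" "card x \<le> b"
  shows "card (Qx d a x) \<le> (d + 1) ^ (b - a)"
proof -
  have fx: "finite x" using assms(1) by (auto simp: cube_def finite_subset)
  have cx: "card x \<le> d" using assms(1) card_mono[of "{..<d}" x] by (auto simp: cube_def)
  have "Qx d a x \<subseteq> (\<lambda>z. x - z) ` {z. z \<subseteq> x \<and> card z \<le> b - a}"
  proof
    fix y assume y: "y \<in> Qx d a x"
    then have yx: "y \<subseteq> x" "a \<le> card y" by (auto simp: Qx_def)
    have "card (x - y) = card x - card y" using yx fx by (simp add: card_Diff_subset finite_subset)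
    then have "card (x - y) \<le> b - a" using yx assms(2) by linarith
    moreover have "y = x - (x - y)" using yx by auto
    ultimately show "y \<in> (\<lambda>z. x - z) ` {z. z \<subseteq> x \<and> card z \<le> b - a}" by blast
  qed
  then have "card (Qx d a x) \<le> card ((\<lambda>z. x - z) ` {z. z \<subseteq> x \<and> card z \<le> b - a})"
    by (rule card_mono[rotated]) (use fx in auto)
  also have "\<dots> \<le> card {z. z \<subseteq> x \<and> card z \<le> b - a}" by (rule card_image_le) (use fx in auto)
  also have "\<dots> \<le> (card x + 1) ^ (b - a)" by (rule small_subsets[OF fx])
  also have "\<dots> \<le> (d + 1) ^ (b - a)" using cx by (simp add: power_mono)
  finally show ?thesis .
qed




lemma X_nonneg:
  assumes "0 < \<epsilon>" "\<epsilon> \<le> 1"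
  shows "0 \<le> sqrt (real d) * log 2 (real d) * log 2 (1 / \<epsilon>)"
proof -
  have "0 \<le> log 2 (real d)" by (cases "d = 0") (auto simp: log_def)
  moreover have "0 \<le> log 2 (1 / \<epsilon>)" using assms by simp
  ultimately show ?thesis by simp
qed

lemma small_d_bound:
  assumes "d \<le> 1" "0 \<le> X"
  shows "real (2 ^ d :: nat) \<le> 2 powr (7 * (1 + X))"
proof -
  have "real (2 ^ d :: nat) \<le> 2" using assms(1) by (cases d) auto
  also have "(2::real) = 2 powr 1" by simp
  also have "\<dots> \<le> 2 powr (7 * (1 + X))" using assms(2) by (intro powr_mono) auto
  finally show ?thesis .
qed

lemma L_le_X:
  assumes "2 \<le> d" "0 < \<epsilon>" "\<epsilon> \<le> 1"
  shows "log 2 (1 / \<epsilon>) \<le> sqrt (real d) * log 2 (real d) * log 2 (1 / \<epsilon>)"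
proof -
  have "1 \<le> sqrt (real d)" using assms by simp
  moreover have "1 \<le> log 2 (real d)" using assms by simp
  ultimately have h1: "1 \<le> sqrt (real d) * log 2 (real d)"
    using mult_mono[of 1 "sqrt (real d)" 1 "log 2 (real d)"] by simp
  have "0 \<le> log 2 (1 / \<epsilon>)" using assms by simp
  then show ?thesis using mult_right_mono[OF h1, of "log 2 (1 / \<epsilon>)"] by simp
qed

lemma inv_eps_powr:
  assumes "0 < \<epsilon>"
  shows "1 / \<epsilon> = 2 powr (log 2 (1 / \<epsilon>))"
  using assms by simp


definition Xv :: "nat \<Rightarrow> real \<Rightarrow> real" where
  "Xv d \<epsilon> = sqrt (real d) * log 2 (real d) * log 2 (1 / \<epsilon>)"

definition good :: "nat \<Rightarrow> real \<Rightarrow> nat \<Rightarrow> na_tester \<Rightarrow> bool" where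
  "good d \<epsilon> k T \<longleftrightarrow> (\<forall>(Q, D) \<in> set_pmf T. Q \<subseteq> cube d \<and> real (card Q) \<le> 2 powr (7 * (1 + Xv d \<epsilon>)))
      \<and> (\<forall>f. k_monotone d k f \<longrightarrow> accept_prob T f = 1)
      \<and> (\<forall>f. eps_far d k \<epsilon> f \<longrightarrow> accept_prob T f \<le> 1 / 3)"

lemma generic_tester:
  assumes Qc: "\<forall>x\<in>cube d. Qf x \<subseteq> cube d \<and> card (Qf x) \<le> M"
    and qb: "2 \<le> d \<Longrightarrow> real (r * M) \<le> 2 powr (7 * (1 + Xv d \<epsilon>))"
    and X0: "0 \<le> Xv d \<epsilon>"
    and snd: "\<And>f. eps_far d k \<epsilon> f \<Longrightarrow> \<exists>G p. G \<subseteq> cube d \<and> (\<forall>x\<in>G. viol_in k (Qf x) f)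
        \<and> p \<le> real (card G) / 2 ^ d \<and> 0 \<le> p \<and> 2 \<le> p * r"
  shows "good d \<epsilon> k (tester d k Qf r)"
  unfolding good_def
proof (intro conjI allI impI)
  show "\<forall>(Q, D) \<in> set_pmf (tester d k Qf r). Q \<subseteq> cube d \<and> real (card Q) \<le> 2 powr (7 * (1 + Xv d \<epsilon>))"
  proof (rule ballI)
    fix y assume y: "y \<in> set_pmf (tester d k Qf r)"
    obtain Q D where yQ: "y = (Q, D)" by (cases y)
    have qd: "(Q, D) \<in> set_pmf (tester d k Qf r)" using y yQ by simp
    note tq = tester_queries[OF qd Qc]
    have "Q \<subseteq> cube d \<and> real (card Q) \<le> 2 powr (7 * (1 + Xv d \<epsilon>))"
    proof (cases "d \<le> 1")
      case True
      have "real (card Q) \<le> real (2 ^ d :: nat)" using tq(3) by (simp only: of_nat_le_iff)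
      moreover have "real (2 ^ d :: nat) \<le> 2 powr (7 * (1 + Xv d \<epsilon>))" by (rule small_d_bound[OF True X0])
      ultimately have "real (card Q) \<le> 2 powr (7 * (1 + Xv d \<epsilon>))" by (rule order_trans)
      then show ?thesis using tq(1) by blast
    next
      case False
      have "real (card Q) \<le> real (r * M)" using tq(2) by (simp only: of_nat_le_iff)
      moreover have "real (r * M) \<le> 2 powr (7 * (1 + Xv d \<epsilon>))" using qb False by simp
      ultimately have "real (card Q) \<le> 2 powr (7 * (1 + Xv d \<epsilon>))" by (rule order_trans)
      then show ?thesis using tq(1) by blast
    qed
    then show "case y of (Q, D) \<Rightarrow> Q \<subseteq> cube d \<and> real (card Q) \<le> 2 powr (7 * (1 + Xv d \<epsilon>))"
      using yQ by simp
  qed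
next
  fix f assume "k_monotone d k f"
  then show "accept_prob (tester d k Qf r) f = 1" using tester_complete Qc by blast
next
  fix f assume "eps_far d k \<epsilon> f"
  then obtain G p where G: "G \<subseteq> cube d" "\<forall>x\<in>G. viol_in k (Qf x) f"
      "p \<le> real (card G) / 2 ^ d" "0 \<le> p" "2 \<le> p * r" using snd by blast
  have "accept_prob (tester d k Qf r) f \<le> (1 - real (card G) / 2 ^ d) ^ r"
    by (rule tester_sound[OF G(1,2)])
  also have "\<dots> \<le> (1 - p) ^ r"
  proof (rule power_mono)
    have "real (card G) \<le> real (card (cube d))" using card_mono[OF finite_cube G(1)] by simp
    then have "real (card G) / 2 ^ d \<le> 1" by (simp add: card_cube)
    then show "0 \<le> 1 - real (card G) / 2 ^ d" by simp
  qed (use G in simp)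
  also have "\<dots> \<le> 1 / 3"
  proof (rule amplify)
    have "real (card G) \<le> real (card (cube d))" using card_mono[OF finite_cube G(1)] by simp
    then have "real (card G) / 2 ^ d \<le> 1" by (simp add: card_cube)
    then show "p \<le> 1" using G(3) by linarith
  qed (use G in auto)
  finally show "accept_prob (tester d k Qf r) f \<le> 1 / 3" .
qed




lemma nat_ceil_le: "0 \<le> y \<Longrightarrow> real (nat \<lceil>y\<rceil>) \<le> y + 1"
  using of_int_ceiling_le_add_one[of y] by (simp add: of_nat_nat)

lemma qbound:
  fixes \<epsilon> :: real
  assumes d2: "2 \<le> d" and e0: "0 < \<epsilon>" and e1: "\<epsilon> \<le> 1/2"
  defines "L \<equiv> log 2 (1 / \<epsilon>)"
  defines "s \<equiv> sqrt (real d * ln (4 / \<epsilon>) / 2)"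
  defines "a \<equiv> nat \<lceil>real d / 2 - s\<rceil>"
  defines "b \<equiv> nat \<lfloor>real d / 2 + s\<rfloor>"
  defines "r \<equiv> nat \<lceil>4 / \<epsilon>\<rceil>"
  shows "real (r * (d + 1) ^ (b - a)) \<le> 2 powr (7 * (1 + Xv d \<epsilon>))"
proof -
  let ?X = "Xv d \<epsilon>"
  have ie: "1 / \<epsilon> = 2 powr L" unfolding L_def using e0 by simp
  have L1: "1 \<le> L"
  proof -
    have "2 \<le> 1 / \<epsilon>" using e0 e1 by (simp add: field_simps)
    then have "log 2 2 \<le> log 2 (1 / \<epsilon>)" using e0 by (subst log_le_cancel_iff) auto
    then show ?thesis unfolding L_def by simp
  qed
  have LX: "L \<le> ?X" unfolding L_def Xv_def using L_le_X[OF d2 e0] e1 by simp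
  have X0: "0 \<le> ?X" unfolding Xv_def using X_nonneg[OF e0] e1 by simp
  have r1: "real r \<le> 2 powr (3 + L)"
  proof -
    have "real r \<le> 4 / \<epsilon> + 1" unfolding r_def using e0 by (intro nat_ceil_le) simp
    also have "\<dots> \<le> 8 * (1 / \<epsilon>)" using e0 e1 by (simp add: field_simps)
    also have "\<dots> = 2 powr 3 * 2 powr L" using ie by simp
    also have "\<dots> = 2 powr (3 + L)" by (simp add: powr_add)
    finally show ?thesis .
  qed
  have "1 \<le> 4 / \<epsilon>" using e0 e1 by (simp add: field_simps)
  then have lnp: "0 \<le> ln (4 / \<epsilon>)" by simp
  have s0: "0 \<le> s" unfolding s_def using lnp by simp
  have w1: "real (b - a) \<le> 2 * s"
  proof (cases "a \<le> b")
    case True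
    have "real b \<le> real d / 2 + s" unfolding b_def using s0
      by (simp add: of_nat_nat of_int_floor_le)
    moreover have "real d / 2 - s \<le> real a" unfolding a_def
      using le_of_int_ceiling[of "real d / 2 - s"]
      by (smt (verit) of_int_of_nat_eq of_nat_nat real_nat_ceiling_ge)
    ultimately show ?thesis using True by (simp add: of_nat_diff)
  qed (use s0 in simp)
  have s1: "s \<le> 3/2 * sqrt (real d) * L"
  proof -
    have ln4: "ln (4 / \<epsilon>) = ln 2 * (2 + L)"
    proof -
      have "ln (4 / \<epsilon>) = ln 4 + ln (1 / \<epsilon>)" using e0 by (simp add: ln_div)
      also have "ln (4::real) = 2 * ln 2"
        using ln_realpow[of 2 2] by simp
      also have "ln (1 / \<epsilon>) = L * ln 2" unfolding L_def log_def by simp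
      finally show ?thesis by (simp add: algebra_simps)
    qed
    have "ln (2::real) \<le> 1" using ln_le_minus_one[of 2] by simp
    then have "ln (4 / \<epsilon>) \<le> 2 + L" unfolding ln4 using L1
      by (simp add: mult_le_cancel_right1)
    also have "\<dots> \<le> 3 * L" using L1 by simp
    finally have "real d * ln (4 / \<epsilon>) / 2 \<le> real d * (3 * L) / 2"
      by (simp add: mult_left_mono divide_right_mono)
    also have "\<dots> \<le> (3/2 * sqrt (real d) * L)\<^sup>2"
    proof -
      have "(3/2 * sqrt (real d) * L)\<^sup>2 = 9/4 * real d * L\<^sup>2"
        by (simp add: power_mult_distrib power_divide)
      moreover have "L \<le> L\<^sup>2" using L1 by (simp add: power2_eq_square)
      then have "real d * L \<le> real d * L\<^sup>2" by (simp add: mult_left_mono)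
      moreover have "0 \<le> real d * L" using L1 by simp
      ultimately show ?thesis using \<open>(3/2 * sqrt (real d) * L)\<^sup>2 = 9/4 * real d * L\<^sup>2\<close>
        by (simp add: algebra_simps)
    qed
    finally show ?thesis unfolding s_def using L1 by (intro real_le_lsqrt) auto
  qed
  have w2: "real (b - a) \<le> 3 * sqrt (real d) * L" using w1 s1 by simp
  have lg: "0 \<le> log 2 (real d)" using d2 by simp
  have p1: "real ((d + 1) ^ (b - a)) \<le> 2 powr (6 * ?X)"
  proof -
    have "2 * d \<le> d * d" using d2 by (intro mult_right_mono) auto
    then have "d + 1 \<le> d * d" using d2 by linarith
    then have "real (d + 1) \<le> real d ^ 2" unfolding power2_eq_square
      by (metis of_nat_le_iff of_nat_mult)
    then have "real ((d + 1) ^ (b - a)) \<le> (real d ^ 2) ^ (b - a)"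
      by (simp add: power_mono)
    also have "(real d ^ 2) ^ (b - a) = real d ^ (2 * (b - a))" by (simp only: power_mult)
    also have "\<dots> = real d powr real (2 * (b - a))" using d2 by (simp only: powr_realpow)
    also have "\<dots> = 2 powr (2 * real (b - a) * log 2 (real d))"
      using d2 by (simp add: powr_def log_def)
    also have "\<dots> \<le> 2 powr (6 * ?X)"
    proof (rule powr_mono)
      have "2 * real (b - a) * log 2 (real d) \<le> 2 * (3 * sqrt (real d) * L) * log 2 (real d)"
        using w2 lg by (intro mult_right_mono) (auto simp: mult_ac)
      then show "2 * real (b - a) * log 2 (real d) \<le> 6 * ?X" unfolding Xv_def L_def by simp
    qed simp
    finally show ?thesis .
  qed
  have "real (r * (d + 1) ^ (b - a)) = real r * real ((d + 1) ^ (b - a))" by simp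
  also have "\<dots> \<le> 2 powr (3 + L) * 2 powr (6 * ?X)"
    using r1 p1 by (intro mult_mono) auto
  also have "\<dots> = 2 powr (3 + L + 6 * ?X)" by (simp add: powr_add)
  also have "\<dots> \<le> 2 powr (7 * (1 + ?X))" using LX X0 by (intro powr_mono) auto
  finally show ?thesis .
qed




lemma case_k0:
  assumes e0: "0 < \<epsilon>" and e1: "\<epsilon> \<le> 1"
  shows "\<exists>T. good d \<epsilon> 0 T"
proof -
  define r where "r = nat \<lceil>2 / \<epsilon>\<rceil>"
  have X0: "0 \<le> Xv d \<epsilon>" unfolding Xv_def using X_nonneg[OF e0 e1] .
  have "good d \<epsilon> 0 (tester d 0 (\<lambda>x. {x}) r)"
  proof (rule generic_tester[where M = 1])
    show "\<forall>x\<in>cube d. {x} \<subseteq> cube d \<and> card {x} \<le> 1" by simp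
    show "0 \<le> Xv d \<epsilon>" by (rule X0)
  next
    assume d2: "2 \<le> d"
    have LX: "log 2 (1 / \<epsilon>) \<le> Xv d \<epsilon>" unfolding Xv_def using L_le_X[OF d2 e0 e1] .
    have "real (r * 1) \<le> 2 / \<epsilon> + 1" unfolding r_def using e0 by (simp add: nat_ceil_le)
    also have "\<dots> \<le> 4 * (1 / \<epsilon>)" using e0 e1 by (simp add: field_simps)
    also have "\<dots> = 2 powr 2 * 2 powr (log 2 (1 / \<epsilon>))" using e0 by simp
    also have "\<dots> = 2 powr (2 + log 2 (1 / \<epsilon>))" by (simp add: powr_add)
    also have "\<dots> \<le> 2 powr (7 * (1 + Xv d \<epsilon>))" using LX X0 by (intro powr_mono) auto
    finally show "real (r * 1) \<le> 2 powr (7 * (1 + Xv d \<epsilon>))" .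
  next
    fix f assume far: "eps_far d 0 \<epsilon> f"
    let ?G = "{x\<in>cube d. f x}"
    have "\<epsilon> * 2 ^ d \<le> real (card ?G)" by (rule far_count0[OF far])
    then have pG: "\<epsilon> \<le> real (card ?G) / 2 ^ d" by (simp add: field_simps)
    have v: "\<forall>x\<in>?G. viol_in 0 {x} f"
      unfolding viol_in_def by (auto intro!: exI[of _ "[_]"])
    have "2 / \<epsilon> \<le> real r" unfolding r_def using real_nat_ceiling_ge by blast
    then have "\<epsilon> * (2 / \<epsilon>) \<le> \<epsilon> * real r" using e0 by (intro mult_left_mono) auto
    then have "2 \<le> \<epsilon> * real r" using e0 by simp
    then show "\<exists>G p. G \<subseteq> cube d \<and> (\<forall>x\<in>G. viol_in 0 {x} f) \<and> p \<le> real (card G) / 2 ^ d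
        \<and> 0 \<le> p \<and> 2 \<le> p * real r"
      using pG v e0 by (intro exI[of _ ?G] exI[of _ \<epsilon>]) auto
  qed
  then show ?thesis by blast
qed

lemma no_far:
  assumes "1 \<le> k" "1/2 < \<epsilon>" "eps_far d k \<epsilon> f"
  shows False
proof -
  have m0: "k_monotone d k (\<lambda>_. False)" by (simp add: k_monotone_def)
  have m1: "k_monotone d k (\<lambda>_. True)" unfolding k_monotone_def using assms(1) by (auto dest: spec[of _ 0])
  have "\<epsilon> \<le> cube_dist d f (\<lambda>_. False)" "\<epsilon> \<le> cube_dist d f (\<lambda>_. True)"
    using assms(3) m0 m1 unfolding eps_far_def by blast+
  then have h: "\<epsilon> * 2 ^ d \<le> real (card {x\<in>cube d. f x})" "\<epsilon> * 2 ^ d \<le> real (card {x\<in>cube d. \<not> f x})"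
    by (simp_all add: cube_dist_def field_simps)
  have u: "{x\<in>cube d. f x} \<union> {x\<in>cube d. \<not> f x} = cube d" by auto
  have i: "{x\<in>cube d. f x} \<inter> {x\<in>cube d. \<not> f x} = {}" by auto
  have "card (cube d) = card {x\<in>cube d. f x} + card {x\<in>cube d. \<not> f x}"
    using card_Un_disjoint[of "{x\<in>cube d. f x}" "{x\<in>cube d. \<not> f x}"] finite_cube[of d] u i
    by simp
  then have "real (card {x\<in>cube d. f x}) + real (card {x\<in>cube d. \<not> f x}) = 2 ^ d"
    unfolding card_cube by (metis of_nat_add of_nat_numeral of_nat_power)
  then have "2 * (\<epsilon> * 2 ^ d) \<le> 2 ^ d" using h by linarith
  then have "(2 * \<epsilon>) * 2 ^ d \<le> 1 * 2 ^ d" by (simp add: mult.assoc)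
  then have "2 * \<epsilon> \<le> 1" by (rule mult_right_le_imp_le) simp
  then show False using assms(2) by simp
qed

lemma case_triv:
  assumes "1 \<le> k" "1/2 < \<epsilon>" "0 \<le> Xv d \<epsilon>"
  shows "\<exists>T. good d \<epsilon> k T"
proof -
  let ?T = "return_pmf ({}, \<lambda>_. True) :: na_tester"
  have "good d \<epsilon> k ?T"
    unfolding good_def
  proof (intro conjI allI impI)
    show "\<forall>(Q, D)\<in>set_pmf ?T. Q \<subseteq> cube d \<and> real (card Q) \<le> 2 powr (7 * (1 + Xv d \<epsilon>))" by simp
    fix f show "accept_prob ?T f = 1" by (simp add: accept_prob_def)
  next
    fix f assume "eps_far d k \<epsilon> f" then show "accept_prob ?T f \<le> 1 / 3" using no_far assms by blast
  qed
  then show ?thesis by blast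
qed


lemma exp_s:
  assumes "0 < d" "0 < \<epsilon>" "\<epsilon> \<le> 1"
  defines "s \<equiv> sqrt (real d * ln (4 / \<epsilon>) / 2)"
  shows "exp (-2 * s\<^sup>2 / real d) = \<epsilon> / 4"
proof -
  have "1 \<le> 4 / \<epsilon>" using assms by (simp add: field_simps)
  then have lnp: "0 \<le> ln (4 / \<epsilon>)" by simp
  have "s\<^sup>2 = real d * ln (4 / \<epsilon>) / 2" unfolding s_def using lnp by simp
  then have "-2 * s\<^sup>2 / real d = - ln (4 / \<epsilon>)" using assms(1) by (simp add: field_simps)
  then show ?thesis using assms by (simp add: exp_minus)
qed

lemma case_main:
  assumes k1: "1 \<le> k" and e0: "0 < \<epsilon>" and e1: "\<epsilon> \<le> 1/2"
  shows "\<exists>T. good d \<epsilon> k T"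
proof -
  define s where "s = sqrt (real d * ln (4 / \<epsilon>) / 2)"
  define a where "a = nat \<lceil>real d / 2 - s\<rceil>"
  define b where "b = nat \<lfloor>real d / 2 + s\<rfloor>"
  define r where "r = nat \<lceil>4 / \<epsilon>\<rceil>"
  define Qf where "Qf = (\<lambda>x. if card x \<le> b then Qx d a x else {})"
  have X0: "0 \<le> Xv d \<epsilon>" unfolding Xv_def using X_nonneg[OF e0] e1 by simp
  have "1 \<le> 4 / \<epsilon>" using e0 e1 by (simp add: field_simps)
  then have lnp: "0 \<le> ln (4 / \<epsilon>)" by simp
  have s0: "0 \<le> s" unfolding s_def using lnp by simp
  have "good d \<epsilon> k (tester d k Qf r)"
  proof (rule generic_tester[where M = "(d + 1) ^ (b - a)"])
    show "\<forall>x\<in>cube d. Qf x \<subseteq> cube d \<and> card (Qf x) \<le> (d + 1) ^ (b - a)"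
      unfolding Qf_def using card_Qx by (auto simp: Qx_def)
    show "0 \<le> Xv d \<epsilon>" by (rule X0)
  next
    assume d2: "2 \<le> d"
    show "real (r * (d + 1) ^ (b - a)) \<le> 2 powr (7 * (1 + Xv d \<epsilon>))"
      unfolding r_def a_def b_def s_def by (rule qbound[OF d2 e0 e1])
  next
    fix f assume far: "eps_far d k \<epsilon> f"
    let ?G = "{x\<in>cube d. card x \<le> b \<and> viol_in k (Qx d a x) f}"
    have fc: "\<epsilon> * 2 ^ d \<le> real (card {x\<in>cube d. card x < a}) + real (card {x\<in>cube d. b < card x})
       + real (card ?G)" by (rule far_count[OF far])
    have t1: "real (card {x\<in>cube d. card x < a}) \<le> \<epsilon> / 4 * 2 ^ d"
    proof (cases "d = 0")
      case True
      then have "a = 0" unfolding a_def s_def by simp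
      then show ?thesis using e0 by simp
    next
      case False
      have sub: "{x\<in>cube d. card x < a} \<subseteq> {x\<in>cube d. real (card x) \<le> real d / 2 - s}"
      proof (clarify)
        fix x assume "x \<in> cube d" "card x < a"
        then have "int (card x) < \<lceil>real d / 2 - s\<rceil>" unfolding a_def by linarith
        then have "real (card x) < real d / 2 - s" by (simp add: less_ceiling_iff)
        then show "real (card x) \<le> real d / 2 - s" by simp
      qed
      have "card {x\<in>cube d. card x < a} \<le> card {x\<in>cube d. real (card x) \<le> real d / 2 - s}"
        by (rule card_mono[OF _ sub]) (simp add: finite_cube)
      then have "real (card {x\<in>cube d. card x < a}) \<le> real (card {x\<in>cube d. real (card x) \<le> real d / 2 - s})"
        by (simp only: of_nat_le_iff)
      also have "\<dots> \<le> exp (-2 * s\<^sup>2 / real d) * 2 ^ d" using False s0 by (intro tail_low) auto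
      also have "exp (-2 * s\<^sup>2 / real d) = \<epsilon> / 4" unfolding s_def using False e0 e1 by (intro exp_s) auto
      finally show ?thesis .
    qed
    have t2: "real (card {x\<in>cube d. b < card x}) \<le> \<epsilon> / 4 * 2 ^ d"
    proof (cases "d = 0")
      case True
      then have "{x\<in>cube d. b < card x} = {}" by (auto simp: cube_def)
      then have "card {x\<in>cube d. b < card x} = 0" by (simp only: card.empty)
      then show ?thesis using e0 by simp
    next
      case False
      have sub: "{x\<in>cube d. b < card x} \<subseteq> {x\<in>cube d. real d / 2 + s \<le> real (card x)}"
      proof (clarify)
        fix x assume "x \<in> cube d" "b < card x"
        then have "\<lfloor>real d / 2 + s\<rfloor> < int (card x)" unfolding b_def by linarith
        then have "real d / 2 + s < real (card x)" by (simp add: floor_less_iff)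
        then show "real d / 2 + s \<le> real (card x)" by simp
      qed
      have "card {x\<in>cube d. b < card x} \<le> card {x\<in>cube d. real d / 2 + s \<le> real (card x)}"
        by (rule card_mono[OF _ sub]) (simp add: finite_cube)
      then have "real (card {x\<in>cube d. b < card x}) \<le> real (card {x\<in>cube d. real d / 2 + s \<le> real (card x)})"
        by (simp only: of_nat_le_iff)
      also have "\<dots> \<le> exp (-2 * s\<^sup>2 / real d) * 2 ^ d" using False s0 by (intro tail_high) auto
      also have "exp (-2 * s\<^sup>2 / real d) = \<epsilon> / 4" unfolding s_def using False e0 e1 by (intro exp_s) auto
      finally show ?thesis .
    qed
    have "\<epsilon> / 2 * 2 ^ d \<le> real (card ?G)" using fc t1 t2 by (simp add: field_simps)
    then have pG: "\<epsilon> / 2 \<le> real (card ?G) / 2 ^ d" by (simp add: field_simps)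
    have v: "\<forall>x\<in>?G. viol_in k (Qf x) f" unfolding Qf_def by simp
    have "4 / \<epsilon> \<le> real r" unfolding r_def using real_nat_ceiling_ge by blast
    then have "\<epsilon> / 2 * (4 / \<epsilon>) \<le> \<epsilon> / 2 * real r" using e0 by (intro mult_left_mono) auto
    then have "2 \<le> \<epsilon> / 2 * real r" using e0 by simp
    then show "\<exists>G p. G \<subseteq> cube d \<and> (\<forall>x\<in>G. viol_in k (Qf x) f) \<and> p \<le> real (card G) / 2 ^ d
        \<and> 0 \<le> p \<and> 2 \<le> p * real r"
      using pG v e0 by (intro exI[of _ ?G] exI[of _ "\<epsilon> / 2"]) auto
  qed
  then show ?thesis by blast
qed

theorem theorem1p2:
  "\<exists>C>0. \<forall>d \<epsilon> k. 0 < \<epsilon> \<and> \<epsilon> \<le> 1 \<longrightarrow>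
     (\<exists>T :: na_tester.
        (\<forall>(Q, D) \<in> set_pmf T. Q \<subseteq> cube d \<and>
            real (card Q) \<le> 2 powr (C * (1 + sqrt (real d) * log 2 (real d) * log 2 (1 / \<epsilon>))))
      \<and> (\<forall>f. k_monotone d k f \<longrightarrow> accept_prob T f = 1)
      \<and> (\<forall>f. eps_far d k \<epsilon> f \<longrightarrow> accept_prob T f \<le> 1 / 3))"
proof (intro exI[of _ 7] conjI allI impI)
  fix d :: nat and \<epsilon> :: real and k :: nat
  assume e: "0 < \<epsilon> \<and> \<epsilon> \<le> 1"
  have "\<exists>T. good d \<epsilon> k T"
  proof (cases "k = 0")
    case True then show ?thesis using case_k0 e by blast
  next
    case False
    then have k1: "1 \<le> k" by simp
    show ?thesis
    proof (cases "\<epsilon> \<le> 1/2")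
      case True then show ?thesis using case_main k1 e by blast
    next
      case False
      have "0 \<le> Xv d \<epsilon>" unfolding Xv_def using X_nonneg e by blast
      then show ?thesis using case_triv k1 False by simp
    qed
  qed
  then show "\<exists>T :: na_tester.
        (\<forall>(Q, D) \<in> set_pmf T. Q \<subseteq> cube d \<and>
            real (card Q) \<le> 2 powr (7 * (1 + sqrt (real d) * log 2 (real d) * log 2 (1 / \<epsilon>))))
      \<and> (\<forall>f. k_monotone d k f \<longrightarrow> accept_prob T f = 1)
      \<and> (\<forall>f. eps_far d k \<epsilon> f \<longrightarrow> accept_prob T f \<le> 1 / 3)"
    unfolding good_def Xv_def by blast
qed simp


end
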